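(* Let $\phi$ be a monotone Boolean formula in the variables $x_1,\dots,x_n$ defining a set $S \subseteq \{0,1\}^n$, and let $Q \subseteq [0,1]^n$ be any convex set containing $S$. If $Q$ satisfies all monotone inequalities of pitch at most $p$ that are valid for $S$, then $\phi(Q)$ satisfies all monotone inequalities of pitch at most $p+1$ that are valid for $S$. Moreover, if $Q$ is a polytope defined by an extended formulation of size $\sigma$, then $\phi(Q)$ is a polytope that can be defined by an extended formulation of size $|\phi|\sigma$.
   Context: Boolean formulas are built from input variables $x_1,\dots,x_n$ using $\wedge$, $\vee$, $\neg$, and interpreted as functions $\{0,1\}^n\to\{0,1\}$; $\phi$ defines $S=\{x\in\{0,1\}^n:\phi(x)=1\}$. A formula is monotone if it contains no negations. The size $|\phi|$ is the total number of occurrences of input variables. For such $\phi$ and a convex $Q\subseteq[0,1]^n$, $\phi(Q)$ is defined recursively: a variable $x_i$ is replaced by $\{x \in Q : x_i = 1\}$ (a negated $\neg x_i$, if present, by $\{x\in Q: x_i=0\}$); a conjunction by the intersection of the corresponding sets; a disjunction by the convex hull of the union of the corresponding sets. A monotone inequality in standard form is $\sum_{i \in I^+} c_i x_i \ge \delta$ with $I^+\subseteq[n]$, $c_i \ge 0$, $\delta \ge 0$. Its pitch is the smallest number $p$ such that $\sum_{j\in J} c_j \ge \delta$ for every $J \subseteq \operatorname{supp}(c)$ with $|J|\ge p$. An extended formulation of size $m$ of a polytope $P\subseteq\mathbb{R}^n$ is a description $P=\{x:\exists y\in\mathbb{R}^d,\ Ay\ge b,\ x=Ty+t\}$ with $A$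 having $m$ rows. *)

theory Defs
  imports "HOL-Analysis.Analysis"
begin

datatype 'v mformula = MVar 'v | MAnd "'v mformula" "'v mformula" | MOr "'v mformula" "'v mformula"

fun meval :: "'v mformula \<Rightarrow> ('v \<Rightarrow> bool) \<Rightarrow> bool" where
  "meval (MVar i) a = a i"
| "meval (MAnd f g) a = (meval f a \<and> meval g a)"
| "meval (MOr f g) a = (meval f a \<or> meval g a)"

fun msize :: "'v mformula \<Rightarrow> nat" where
  "msize (MVar i) = 1"
| "msize (MAnd f g) = msize f + msize g"
| "msize (MOr f g) = msize f + msize g"

definition defined_set :: "'n mformula \<Rightarrow> (real ^ 'n) set" where
  "defined_set \<phi> = {x. (\<forall>i. x $ i = 0 \<or> x $ i = 1) \<and> meval \<phi> (\<lambda>i. x $ i = 1)}"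

fun mapply :: "'n mformula \<Rightarrow> (real ^ 'n) set \<Rightarrow> (real ^ 'n) set" where
  "mapply (MVar i) Q = {x \<in> Q. x $ i = 1}"
| "mapply (MAnd f g) Q = mapply f Q \<inter> mapply g Q"
| "mapply (MOr f g) Q = convex hull (mapply f Q \<union> mapply g Q)"

definition satisfies_ineq :: "(real ^ 'n) set \<Rightarrow> ('n \<Rightarrow> real) \<Rightarrow> real \<Rightarrow> bool" where
  "satisfies_ineq A c \<delta> \<longleftrightarrow> (\<forall>x\<in>A. (\<Sum>i\<in>UNIV. c i * x $ i) \<ge> \<delta>)"

definition supp :: "('n \<Rightarrow> real) \<Rightarrow> 'n set" where
  "supp c = {i. c i \<noteq> 0}"

definition pitch :: "('n::finite \<Rightarrow> real) \<Rightarrow> real \<Rightarrow> nat" where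
  "pitch c \<delta> = (LEAST p. \<forall>J. J \<subseteq> supp c \<and> card J \<ge> p \<longrightarrow> (\<Sum>j\<in>J. c j) \<ge> \<delta>)"

definition has_ext_form :: "(real ^ 'n) set \<Rightarrow> nat \<Rightarrow> bool" where
  "has_ext_form P m \<longleftrightarrow>
     (\<exists>(d::nat) (A :: nat \<Rightarrow> nat \<Rightarrow> real) (b :: nat \<Rightarrow> real) (T :: 'n \<Rightarrow> nat \<Rightarrow> real) (t :: real ^ 'n).
        P = {x. \<exists>y :: nat \<Rightarrow> real.
                  (\<forall>r<m. (\<Sum>j<d. A r j * y j) \<ge> b r) \<and>
                  (\<forall>k. x $ k = (\<Sum>j<d. T k j * y j) + t $ k)})"

end

theory Submission
  imports Defs
begin

lemma meval_mono: "(\<forall>i. a i \<longrightarrow> b i) \<Longrightarrow> meval f a \<Longrightarrow> meval f b"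
  by (induction f) auto

lemma msize_pos: "msize f \<ge> 1"
  by (induction f) auto

lemma mapply_sub: "convex Q \<Longrightarrow> mapply f Q \<subseteq> Q"
  by (induction f) (auto, metis (no_types, lifting) Un_least hull_minimal subsetD)

lemma mapply_convex: "convex Q \<Longrightarrow> convex (mapply f Q)"
proof (induction f)
  case (MVar i)
  have "{x \<in> Q. x $ i = 1} = Q \<inter> {x. x $ i = 1}" by auto
  moreover have "convex {x::real^'a. x $ i = 1}"
    unfolding convex_def by (auto simp: algebra_simps)
  ultimately show ?case using MVar by (simp add: convex_Int)
qed (auto intro: convex_Int)

definition ones :: "real ^ 'n" where "ones = (\<chi> i. 1)"

lemma ones_mapply: "ones \<in> Q \<Longrightarrow> ones \<in> mapply f Q"
  by (induction f) (auto simp: ones_def intro: hull_inc)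

lemma ones_defined: "ones \<in> defined_set f"
proof -
  have "meval f (\<lambda>i. True)" by (induction f) auto
  then show ?thesis unfolding defined_set_def ones_def by simp
qed


lemma pitch_prop:
  fixes c :: "'n::finite \<Rightarrow> real"
  assumes "pitch c \<delta> \<le> q" "J \<subseteq> supp c" "card J \<ge> q"
  shows "(\<Sum>j\<in>J. c j) \<ge> \<delta>"
proof -
  let ?P = "\<lambda>p. \<forall>J. J \<subseteq> supp c \<and> card J \<ge> p \<longrightarrow> (\<Sum>j\<in>J. c j) \<ge> \<delta>"
  have "?P (card (UNIV::'n set) + 1)"
    using card_mono[of UNIV] by (metis Suc_eq_plus1 finite not_less_eq_eq top_greatest)
  then have "?P (pitch c \<delta>)" unfolding pitch_def by (rule LeastI)
  then show ?thesis using assms by auto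
qed

lemma pitch_le:
  fixes c :: "'n::finite \<Rightarrow> real"
  assumes "\<forall>J. J \<subseteq> supp c \<and> card J \<ge> q \<longrightarrow> (\<Sum>j\<in>J. c j) \<ge> \<delta>"
  shows "pitch c \<delta> \<le> q"
  unfolding pitch_def using assms by (rule Least_le)

lemma sum_split_i:
  fixes c :: "'n::finite \<Rightarrow> real"
  shows "(\<Sum>j\<in>UNIV. c j * x $ j) = c i * x $ i + (\<Sum>j\<in>UNIV. (c(i:=0)) j * x $ j)"
proof -
  have "(\<Sum>j\<in>UNIV. c j * x $ j) = (\<Sum>j\<in>UNIV. (c(i:=0)) j * x $ j + (if j = i then c i * x $ i else 0))"
    by (rule sum.cong) auto
  also have "\<dots> = c i * x $ i + (\<Sum>j\<in>UNIV. (c(i:=0)) j * x $ j)"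
    by (simp add: sum.distrib)
  finally show ?thesis .
qed

lemma leaf_ok:
  fixes c :: "'n::finite \<Rightarrow> real" and \<phi> :: "'n mformula"
  assumes hyp: "\<forall>c \<delta>. (\<forall>i. c i \<ge> 0) \<longrightarrow> \<delta> \<ge> 0 \<longrightarrow> satisfies_ineq (defined_set \<phi>) c \<delta>
              \<longrightarrow> pitch c \<delta> \<le> p \<longrightarrow> satisfies_ineq Q c \<delta>"
    and c0: "\<forall>i. c i \<ge> 0" and d0: "\<delta> \<ge> 0" and val: "satisfies_ineq (defined_set \<phi>) c \<delta>"
    and pc: "pitch c \<delta> \<le> p + 1" and iU: "i \<in> supp c"
    and xQ: "x \<in> Q" and xi: "x $ i = 1"
  shows "\<delta> \<le> (\<Sum>j\<in>UNIV. c j * x $ j)"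
proof -
  define c' where "c' = c(i:=0)"
  define \<delta>' where "\<delta>' = max 0 (\<delta> - c i)"
  have c'0: "\<forall>j. c' j \<ge> 0" using c0 by (simp add: c'_def)
  have d'0: "\<delta>' \<ge> 0" by (simp add: \<delta>'_def)
  have val': "satisfies_ineq (defined_set \<phi>) c' \<delta>'"
    unfolding satisfies_ineq_def
  proof
    fix y assume y: "y \<in> defined_set \<phi>"
    define y' where "y' = ((\<chi> j. if j = i then 1 else y $ j) :: real^'n)"
    have "y' \<in> defined_set \<phi>"
      using y unfolding defined_set_def y'_def
      by (auto intro: meval_mono[rotated])
    then have "\<delta> \<le> (\<Sum>j\<in>UNIV. c j * y' $ j)" using val by (auto simp: satisfies_ineq_def)
    also have "\<dots> = c i + (\<Sum>j\<in>UNIV. c' j * y $ j)"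
      unfolding sum_split_i[of c y' i] c'_def by (simp add: y'_def, intro sum.cong) auto
    finally have 1: "\<delta> - c i \<le> (\<Sum>j\<in>UNIV. c' j * y $ j)" by simp
    have "\<forall>j. y $ j = 0 \<or> y $ j = 1" using y by (simp add: defined_set_def)
    then have "\<forall>j. 0 \<le> c' j * y $ j" using c'0 by (metis mult_nonneg_nonneg mult_zero_right order_refl zero_le_one)
    then have "0 \<le> (\<Sum>j\<in>UNIV. c' j * y $ j)" by (simp add: sum_nonneg)
    with 1 show "\<delta>' \<le> (\<Sum>j\<in>UNIV. c' j * y $ j)" by (simp add: \<delta>'_def)
  qed
  have "pitch c' \<delta>' \<le> p"
  proof (rule pitch_le, intro allI impI)
    fix J assume J: "J \<subseteq> supp c' \<and> p \<le> card J"
    then have iJ: "i \<notin> J" by (auto simp: supp_def c'_def)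
    have "insert i J \<subseteq> supp c" using J iU by (auto simp: supp_def c'_def split: if_splits)
    moreover have "card (insert i J) \<ge> p + 1" using J iJ by (simp add: finite_subset)
    ultimately have "\<delta> \<le> (\<Sum>j\<in>insert i J. c j)" using pitch_prop[OF pc] by blast
    also have "\<dots> = c i + (\<Sum>j\<in>J. c j)" using iJ by (simp add: finite_subset)
    also have "(\<Sum>j\<in>J. c j) = (\<Sum>j\<in>J. c' j)" using iJ by (intro sum.cong) (auto simp: c'_def)
    finally have "\<delta> - c i \<le> (\<Sum>j\<in>J. c' j)" by simp
    moreover have "0 \<le> (\<Sum>j\<in>J. c' j)" using c'0 by (simp add: sum_nonneg)
    ultimately show "\<delta>' \<le> (\<Sum>j\<in>J. c' j)" by (simp add: \<delta>'_def)
  qed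
  then have "satisfies_ineq Q c' \<delta>'" using hyp c'0 d'0 val' by blast
  then have "\<delta>' \<le> (\<Sum>j\<in>UNIV. c' j * x $ j)" using xQ by (auto simp: satisfies_ineq_def)
  moreover have "(\<Sum>j\<in>UNIV. c j * x $ j) = c i + (\<Sum>j\<in>UNIV. c' j * x $ j)"
    using sum_split_i[of c x i] xi by (simp add: c'_def)
  ultimately show ?thesis by (simp add: \<delta>'_def)
qed

lemma halfspace_convex: "convex {x::real^'n. \<delta> \<le> (\<Sum>j\<in>UNIV. c j * x $ j)}"
proof (rule convexI)
  fix x y :: "real^'n" and u v :: real
  assume x: "x \<in> {x. \<delta> \<le> (\<Sum>j\<in>UNIV. c j * x $ j)}" and y: "y \<in> {x. \<delta> \<le> (\<Sum>j\<in>UNIV. c j * x $ j)}"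
    and u: "0 \<le> u" and v: "0 \<le> v" and uv: "u + v = 1"
  have e: "(\<Sum>j\<in>UNIV. c j * (u *\<^sub>R x + v *\<^sub>R y) $ j) = u * (\<Sum>j\<in>UNIV. c j * x $ j) + v * (\<Sum>j\<in>UNIV. c j * y $ j)"
    by (simp add: sum.distrib sum_distrib_left distrib_left mult.left_commute)
  have "u * \<delta> + v * \<delta> \<le> u * (\<Sum>j\<in>UNIV. c j * x $ j) + v * (\<Sum>j\<in>UNIV. c j * y $ j)"
    using x y u v by (simp add: add_mono mult_left_mono)
  moreover have "u * \<delta> + v * \<delta> = \<delta>" using uv by (metis distrib_right mult_1)
  ultimately show "u *\<^sub>R x + v *\<^sub>R y \<in> {x. \<delta> \<le> (\<Sum>j\<in>UNIV. c j * x $ j)}"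
    using e by simp
qed

lemma struct_lemma:
  fixes U :: "'n::finite set"
  assumes "convex Q"
  shows "meval f (\<lambda>j. j \<notin> U) \<or> mapply f Q \<subseteq> convex hull (\<Union>i\<in>U. {x\<in>Q. x $ i = 1})"
proof (induction f)
  case (MVar i)
  then show ?case by (auto intro: hull_inc)
next
  case (MAnd f1 f2)
  then show ?case by auto
next
  case (MOr f1 f2)
  then show ?case
    by (metis (no_types, lifting) Un_least convex_convex_hull hull_minimal meval.simps(3) mapply.simps(3))
qed

lemma part1:
  fixes \<phi> :: "'n::finite mformula" and Q :: "(real ^ 'n) set" and p :: nat
  assumes cQ: "convex Q"
    and cube: "\<forall>x\<in>Q. \<forall>i. 0 \<le> x $ i \<and> x $ i \<le> 1"
  assumes hyp: "\<forall>c \<delta>. (\<forall>i. c i \<ge> 0) \<longrightarrow> \<delta> \<ge> 0 \<longrightarrow> satisfies_ineq (defined_set \<phi>) c \<delta>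
              \<longrightarrow> pitch c \<delta> \<le> p \<longrightarrow> satisfies_ineq Q c \<delta>"
  shows "\<forall>c \<delta>. (\<forall>i. c i \<ge> 0) \<longrightarrow> \<delta> \<ge> 0 \<longrightarrow> satisfies_ineq (defined_set \<phi>) c \<delta>
              \<longrightarrow> pitch c \<delta> \<le> p + 1 \<longrightarrow> satisfies_ineq (mapply \<phi> Q) c \<delta>"
proof (intro allI impI)
  fix c :: "'n \<Rightarrow> real" and \<delta> :: real
  assume c0: "\<forall>i. c i \<ge> 0" and d0: "\<delta> \<ge> 0" and val: "satisfies_ineq (defined_set \<phi>) c \<delta>"
    and pc: "pitch c \<delta> \<le> p + 1"
  let ?G = "{x::real^'n. \<delta> \<le> (\<Sum>j\<in>UNIV. c j * x $ j)}"
  have QG: "(\<Union>i\<in>supp c. {x\<in>Q. x $ i = 1}) \<subseteq> ?G"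
    using leaf_ok[OF hyp c0 d0 val pc] by blast
  have nonneg: "\<forall>x\<in>Q. 0 \<le> (\<Sum>j\<in>UNIV. c j * x $ j)"
    using cube c0 by (simp add: sum_nonneg)
  from struct_lemma[OF cQ, of \<phi> "supp c"] show "satisfies_ineq (mapply \<phi> Q) c \<delta>"
  proof
    assume m: "meval \<phi> (\<lambda>j. j \<notin> supp c)"
    define z where "z = ((\<chi> j. if j \<in> supp c then 0 else 1) :: real^'n)"
    have "(\<lambda>i. z $ i = 1) = (\<lambda>j. j \<notin> supp c)" by (auto simp: z_def)
    then have "z \<in> defined_set \<phi>" using m by (auto simp: defined_set_def z_def)
    then have "\<delta> \<le> (\<Sum>j\<in>UNIV. c j * z $ j)" using val by (auto simp: satisfies_ineq_def)
    also have "(\<Sum>j\<in>UNIV. c j * z $ j) = 0" by (rule sum.neutral) (auto simp: z_def supp_def)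
    finally have "\<delta> = 0" using d0 by simp
    then show ?thesis using nonneg mapply_sub[OF cQ] by (auto simp: satisfies_ineq_def)
  next
    assume "mapply \<phi> Q \<subseteq> convex hull (\<Union>i\<in>supp c. {x\<in>Q. x $ i = 1})"
    moreover have "convex hull (\<Union>i\<in>supp c. {x\<in>Q. x $ i = 1}) \<subseteq> ?G"
      using QG halfspace_convex by (rule hull_minimal)
    ultimately show ?thesis by (auto simp: satisfies_ineq_def)
  qed
qed


definition aff :: "nat \<Rightarrow> ((nat \<Rightarrow> real) \<Rightarrow> real) \<Rightarrow> bool" where
  "aff d g \<longleftrightarrow> (\<exists>c e. \<forall>y. g y = (\<Sum>j<d. c j * y j) + e)"

lemma aff_const: "aff d (\<lambda>y. e)"
  unfolding aff_def by (rule exI[of _ "\<lambda>j. 0"]) auto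

lemma aff_coord: "j < d \<Longrightarrow> aff d (\<lambda>y. y j)"
  unfolding aff_def
  by (rule exI[of _ "\<lambda>i. if i = j then 1 else 0"], rule exI[of _ 0]) (auto simp: sum.delta mult_delta_left)

lemma aff_add: "aff d f \<Longrightarrow> aff d g \<Longrightarrow> aff d (\<lambda>y. f y + g y)"
  unfolding aff_def
proof (elim exE)
  fix c e c' e' assume f: "\<forall>y. f y = (\<Sum>j<d. c j * y j) + e" and g: "\<forall>y. g y = (\<Sum>j<d. c' j * y j) + e'"
  show "\<exists>c e. \<forall>y. f y + g y = (\<Sum>j<d. c j * y j) + e"
    by (rule exI[of _ "\<lambda>j. c j + c' j"], rule exI[of _ "e + e'"]) (simp add: f g sum.distrib distrib_right)
qed

lemma aff_smult: "aff d f \<Longrightarrow> aff d (\<lambda>y. a * f y)"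
  unfolding aff_def
proof (elim exE)
  fix c e assume f: "\<forall>y. f y = (\<Sum>j<d. c j * y j) + e"
  show "\<exists>c e. \<forall>y. a * f y = (\<Sum>j<d. c j * y j) + e"
    by (rule exI[of _ "\<lambda>j. a * c j"], rule exI[of _ "a * e"]) (simp add: f sum_distrib_left distrib_left mult.assoc)
qed

lemma aff_minus: "aff d f \<Longrightarrow> aff d g \<Longrightarrow> aff d (\<lambda>y. f y - g y)"
  using aff_add[of d f "\<lambda>y. (-1) * g y"] aff_smult[of d g "-1"] by simp

lemma aff_mono: "aff d f \<Longrightarrow> d \<le> d' \<Longrightarrow> aff d' f"
  unfolding aff_def
proof (elim exE)
  fix c e assume f: "\<forall>y. f y = (\<Sum>j<d. c j * y j) + e" and dd: "d \<le> d'"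
  show "\<exists>c e. \<forall>y. f y = (\<Sum>j<d'. c j * y j) + e"
  proof (rule exI[of _ "\<lambda>j. if j < d then c j else 0"], rule exI[of _ e], rule allI)
    fix y
    have "(\<Sum>j<d'. (if j < d then c j else 0) * y j) = (\<Sum>j<d'. if j \<in> {j. j < d} then c j * y j else 0)"
      by (rule sum.cong) auto
    also have "\<dots> = (\<Sum>j\<in>{..<d'} \<inter> {j. j < d}. c j * y j)"
      by (simp add: sum.inter_restrict)
    also have "{..<d'} \<inter> {j. j < d} = {..<d}" using dd by auto
    finally show "f y = (\<Sum>j<d'. (if j < d then c j else 0) * y j) + e" using f by simp
  qed
qed

lemma sum_shift_concat: fixes f :: "nat \<Rightarrow> real" shows "(\<Sum>j<a + b. f j) = (\<Sum>j<a. f j) + (\<Sum>j<b. f (a + j))"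
  by (induction b) (auto simp: add.commute add.left_commute)

lemma aff_shift: "aff d f \<Longrightarrow> aff (s + d) (\<lambda>y. f (\<lambda>j. y (s + j)))"
  unfolding aff_def
proof (elim exE)
  fix c e assume f: "\<forall>y. f y = (\<Sum>j<d. c j * y j) + e"
  show "\<exists>c e. \<forall>y. f (\<lambda>j. y (s + j)) = (\<Sum>j<s + d. c j * y j) + e"
  proof (rule exI[of _ "\<lambda>j. if j < s then 0 else c (j - s)"], rule exI[of _ e], rule allI)
    fix y
    show "f (\<lambda>j. y (s + j)) = (\<Sum>j<s + d. (if j < s then 0 else c (j - s)) * y j) + e"
      by (simp add: f sum_shift_concat)
  qed
qed

lemma aff_rep: "aff d f \<Longrightarrow> \<exists>c. \<forall>y. f y = (\<Sum>j<d. c j * y j) + f (\<lambda>j. 0)"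
  unfolding aff_def by auto

lemma aff_dep: "aff d f \<Longrightarrow> (\<forall>j<d. y j = z j) \<Longrightarrow> f y = f z"
  unfolding aff_def by auto

lemma aff_lin: "aff d f \<Longrightarrow> f (\<lambda>j. y j + s * v j) = f y + s * (f v - f (\<lambda>j. 0))"
  unfolding aff_def by (auto simp: distrib_left sum.distrib sum_distrib_left algebra_simps)

lemma aff_scale: "aff d f \<Longrightarrow> f (\<lambda>j. s * v j) = s * (f v - f (\<lambda>j. 0)) + f (\<lambda>j. 0)"
  using aff_lin[of d f "\<lambda>j. 0" s v] by simp

lemma aff_comb: "aff d f \<Longrightarrow> f (\<lambda>j. u * y j + (1 - u) * z j) = u * f y + (1 - u) * f z"
  unfolding aff_def
proof (elim exE)
  fix c e assume f: "\<forall>y. f y = (\<Sum>j<d. c j * y j) + e"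
  have "(\<Sum>j<d. c j * (u * y j + (1 - u) * z j)) = (\<Sum>j<d. u * (c j * y j) + (1 - u) * (c j * z j))"
    by (rule sum.cong) (auto simp: algebra_simps)
  also have "\<dots> = u * (\<Sum>j<d. c j * y j) + (1 - u) * (\<Sum>j<d. c j * z j)"
    by (simp add: sum.distrib sum_distrib_left)
  finally show ?thesis using f by (simp add: algebra_simps)
qed


definition gsetE :: "nat \<Rightarrow> (nat \<Rightarrow> (nat \<Rightarrow> real) \<Rightarrow> real) \<Rightarrow> ((nat \<Rightarrow> real) \<Rightarrow> real) list
   \<Rightarrow> ('n \<Rightarrow> (nat \<Rightarrow> real) \<Rightarrow> real) \<Rightarrow> (real ^ 'n) set" where
  "gsetE m g E h = {x. \<exists>y. (\<forall>r<m. 0 \<le> g r y) \<and> (\<forall>e\<in>set E. e y = 0) \<and> (\<forall>k. x $ k = h k y)}"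

definition gef :: "(real ^ 'n) set \<Rightarrow> nat \<Rightarrow> bool" where
  "gef P m \<longleftrightarrow> (\<exists>d g h. (\<forall>r<m. aff d (g r)) \<and> (\<forall>k. aff d (h k)) \<and> P = gsetE m g [] h)"

lemma has_ext_form_gef: "has_ext_form P m \<longleftrightarrow> gef P m"
proof
  assume "has_ext_form P m"
  then obtain d A b T t where P: "P = {x. \<exists>y :: nat \<Rightarrow> real.
                  (\<forall>r<m. (\<Sum>j<d. A r j * y j) \<ge> b r) \<and>
                  (\<forall>k. x $ k = (\<Sum>j<d. T k j * y j) + t $ k)}"
    unfolding has_ext_form_def by blast
  define g where "g r y = (\<Sum>j<d. A r j * y j) - b r" for r y
  define h where "h k y = (\<Sum>j<d. T k j * y j) + t $ k" for k y
  have "\<forall>r<m. aff d (g r)" unfolding aff_def g_def by (metis diff_conv_add_uminus)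
  moreover have "\<forall>k. aff d (h k)" unfolding aff_def h_def by blast
  moreover have "P = gsetE m g [] h" unfolding P gsetE_def g_def h_def by simp
  ultimately show "gef P m" unfolding gef_def by blast
next
  assume "gef P m"
  then obtain d g h where ag: "\<forall>r<m. aff d (g r)" and ah: "\<forall>k. aff d (h k)" and P: "P = gsetE m g [] h"
    unfolding gef_def by blast
  have "\<forall>r. \<exists>c. r < m \<longrightarrow> (\<forall>y. g r y = (\<Sum>j<d. c j * y j) + g r (\<lambda>j. 0))"
    using ag aff_rep by blast
  then obtain A where A: "\<And>r y. r < m \<Longrightarrow> g r y = (\<Sum>j<d. A r j * y j) + g r (\<lambda>j. 0)"
    by metis
  have "\<forall>k. \<exists>c. (\<forall>y. h k y = (\<Sum>j<d. c j * y j) + h k (\<lambda>j. 0))"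
    using ah aff_rep by blast
  then obtain T where T: "\<And>k y. h k y = (\<Sum>j<d. T k j * y j) + h k (\<lambda>j. 0)"
    by metis
  define b where "b r = - g r (\<lambda>j. 0)" for r
  define t where "t = (\<chi> k. h k (\<lambda>j. 0))"
  have "P = {x. \<exists>y :: nat \<Rightarrow> real.
                  (\<forall>r<m. (\<Sum>j<d. A r j * y j) \<ge> b r) \<and>
                  (\<forall>k. x $ k = (\<Sum>j<d. T k j * y j) + t $ k)}"
  proof -
    have "\<And>y r. r < m \<Longrightarrow> (0 \<le> g r y) \<longleftrightarrow> ((\<Sum>j<d. A r j * y j) \<ge> b r)"
    proof -
      fix y r assume "r < m"
      from A[OF this, of y] show "(0 \<le> g r y) \<longleftrightarrow> ((\<Sum>j<d. A r j * y j) \<ge> b r)"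
        unfolding b_def by linarith
    qed
    then have "\<And>y. (\<forall>r<m. 0 \<le> g r y) \<longleftrightarrow> (\<forall>r<m. (\<Sum>j<d. A r j * y j) \<ge> b r)" by blast
    moreover have "\<And>y k. h k y = (\<Sum>j<d. T k j * y j) + t $ k"
    proof -
      fix y k
      have tk: "t $ k = h k (\<lambda>j. 0)" by (simp add: t_def)
      show "h k y = (\<Sum>j<d. T k j * y j) + t $ k" using T[of k y] tk by linarith
    qed
    ultimately show ?thesis unfolding P gsetE_def by simp
  qed
  then show "has_ext_form P m" unfolding has_ext_form_def by blast
qed

lemma sub1:
  assumes a: "aff d a" and ex: "\<exists>y0. a y0 = 0"
  shows "\<exists>\<sigma>. (\<forall>f. aff d f \<longrightarrow> aff d (\<lambda>y. f (\<sigma> y))) \<and> (\<forall>y. a (\<sigma> y) = 0) \<and> (\<forall>y. a y = 0 \<longrightarrow> \<sigma> y = y)"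
proof (cases "\<forall>y. a y = a (\<lambda>j. 0)")
  case True
  then have "\<forall>y. a y = 0" using ex by metis
  then show ?thesis by (intro exI[of _ "\<lambda>y. y"]) auto
next
  case False
  then obtain y1 where y1: "a y1 \<noteq> a (\<lambda>j. 0)" by blast
  define \<alpha> where "\<alpha> = a y1 - a (\<lambda>j. 0)"
  have \<alpha>: "\<alpha> \<noteq> 0" using y1 by (simp add: \<alpha>_def)
  define v where "v = (\<lambda>j. (1/\<alpha>) * y1 j)"
  have av: "a v - a (\<lambda>j. 0) = 1" unfolding v_def aff_scale[OF a] using \<alpha> by (simp add: \<alpha>_def)
  define \<sigma> where "\<sigma> y = (\<lambda>j. y j + (- a y) * v j)" for y
  have s1: "\<forall>y. a (\<sigma> y) = 0"
  proof
    fix y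
    have "a (\<sigma> y) = a y + (- a y) * (a v - a (\<lambda>j. 0))" unfolding \<sigma>_def by (rule aff_lin[OF a])
    then show "a (\<sigma> y) = 0" using av by simp
  qed
  have s2: "\<forall>y. a y = 0 \<longrightarrow> \<sigma> y = y" unfolding \<sigma>_def by simp
  have s3: "\<forall>f. aff d f \<longrightarrow> aff d (\<lambda>y. f (\<sigma> y))"
  proof (intro allI impI)
    fix f assume f: "aff d f"
    have "(\<lambda>y. f (\<sigma> y)) = (\<lambda>y. f y + (- (f v - f (\<lambda>j. 0))) * a y)"
    proof
      fix y
      have "f (\<sigma> y) = f y + (- a y) * (f v - f (\<lambda>j. 0))" unfolding \<sigma>_def by (rule aff_lin[OF f])
      then show "f (\<sigma> y) = f y + (- (f v - f (\<lambda>j. 0))) * a y" by (simp add: algebra_simps)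
    qed
    moreover have "aff d (\<lambda>y. f y + (- (f v - f (\<lambda>j. 0))) * a y)"
      by (intro aff_add aff_smult f a)
    ultimately show "aff d (\<lambda>y. f (\<sigma> y))" by simp
  qed
  show ?thesis using s1 s2 s3 by blast
qed

lemma elim_eqs:
  "(\<forall>e\<in>set E. aff d e) \<Longrightarrow> (\<forall>r<m. aff d (g r)) \<Longrightarrow> (\<forall>k. aff d (h k)) \<Longrightarrow> (\<exists>y. \<forall>e\<in>set E. e y = 0) \<Longrightarrow>
   \<exists>g' h'. (\<forall>r<m. aff d (g' r)) \<and> (\<forall>k. aff d (h' k)) \<and> gsetE m g E h = gsetE m g' [] h'"
proof (induction "length E" arbitrary: E g h)
  case 0
  then have "E = []" by simp
  then show ?case using "0.prems"(2,3) by blast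
next
  case (Suc n E0)
  then obtain a E where E0: "E0 = a # E" and lenE: "length E = n" by (cases E0) auto
  have P1: "\<forall>e\<in>set (a#E). aff d e" and P2: "\<forall>r<m. aff d (g r)" and P3: "\<forall>k. aff d (h k)"
    and P4: "\<exists>y. \<forall>e\<in>set (a#E). e y = 0" using Suc.prems E0 by auto
  have a: "aff d a" using P1 by simp
  obtain y0 where y0: "\<forall>e\<in>set (a # E). e y0 = 0" using P4 by blast
  have "\<exists>y0. a y0 = 0" using y0 by auto
  from sub1[OF a this] obtain \<sigma> where s3: "\<forall>f. aff d f \<longrightarrow> aff d (\<lambda>y. f (\<sigma> y))" and s1: "\<forall>y. a (\<sigma> y) = 0"
    and s2: "\<forall>y. a y = 0 \<longrightarrow> \<sigma> y = y"
    by blast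
  define g2 where "g2 r y = g r (\<sigma> y)" for r y
  define h2 where "h2 k y = h k (\<sigma> y)" for k y
  define E2 where "E2 = map (\<lambda>e y. e (\<sigma> y)) E"
  have i1: "\<forall>e\<in>set E2. aff d e" using P1 s3 unfolding E2_def by simp
  have i2: "\<forall>r<m. aff d (g2 r)" using P2 s3 unfolding g2_def by blast
  have i3: "\<forall>k. aff d (h2 k)" using P3 s3 unfolding h2_def by blast
  have i4: "\<exists>y. \<forall>e\<in>set E2. e y = 0"
    using y0 s2 by (auto simp: E2_def intro!: exI[of _ y0])
  obtain g' h' where gh: "(\<forall>r<m. aff d (g' r)) \<and> (\<forall>k. aff d (h' k)) \<and> gsetE m g2 E2 h2 = gsetE m g' [] h'"
  proof -
    have "n = length E2" by (simp add: E2_def lenE)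
    from Suc.hyps(1)[OF this i1 i2 i3 i4] show ?thesis using that by blast
  qed
  have "gsetE m g (a # E) h = gsetE m g2 E2 h2"
  proof
    show "gsetE m g (a # E) h \<subseteq> gsetE m g2 E2 h2"
    proof
      fix x assume "x \<in> gsetE m g (a # E) h"
      then obtain y where y: "\<forall>r<m. 0 \<le> g r y" "\<forall>e\<in>set (a#E). e y = 0" "\<forall>k. x $ k = h k y"
        unfolding gsetE_def by blast
      then have "\<sigma> y = y" using s2 by simp
      then show "x \<in> gsetE m g2 E2 h2" unfolding gsetE_def g2_def h2_def E2_def using y
        by (auto intro!: exI[of _ y])
    qed
  next
    show "gsetE m g2 E2 h2 \<subseteq> gsetE m g (a # E) h"
    proof
      fix x assume "x \<in> gsetE m g2 E2 h2"
      then obtain y where y: "\<forall>r<m. 0 \<le> g r (\<sigma> y)" "\<forall>e\<in>set E. e (\<sigma> y) = 0" "\<forall>k. x $ k = h k (\<sigma> y)"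
        unfolding gsetE_def g2_def h2_def E2_def by auto
      then show "x \<in> gsetE m g (a # E) h" unfolding gsetE_def using s1
        by (auto intro!: exI[of _ "\<sigma> y"])
    qed
  qed
  then show ?case using gh E0 by auto
qed


definition goodf :: "nat \<Rightarrow> nat \<Rightarrow> (nat \<Rightarrow> (nat \<Rightarrow> real) \<Rightarrow> real) \<Rightarrow> ('n \<Rightarrow> (nat \<Rightarrow> real) \<Rightarrow> real) \<Rightarrow> (real^'n) set \<Rightarrow> bool" where
  "goodf d m g h P \<longleftrightarrow> (\<forall>r<m. aff d (g r)) \<and> (\<forall>k. aff d (h k)) \<and> P = gsetE m g [] h
     \<and> (\<forall>y l. (\<forall>r<m. 0 \<le> (g r y - g r (\<lambda>j. 0)) + g r (\<lambda>j. 0) * l) \<longrightarrow> 0 \<le> l)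
     \<and> (\<forall>y. (\<forall>r<m. 0 \<le> g r y - g r (\<lambda>j. 0)) \<longrightarrow> (\<forall>k. h k y = h k (\<lambda>j. 0)))"

lemma N2_lemma:
  fixes h :: "'n::finite \<Rightarrow> (nat \<Rightarrow> real) \<Rightarrow> real"
  assumes ag: "\<forall>r<m. aff d (g r)" and ah: "\<forall>k. aff d (h k)" and P: "P = gsetE m g [] h"
    and ne: "P \<noteq> {}" and bd: "bounded P"
  shows "\<forall>y. (\<forall>r<m. 0 \<le> g r y - g r (\<lambda>j. 0)) \<longrightarrow> (\<forall>k. h k y = h k (\<lambda>j. 0))"
proof (intro allI impI)
  fix v k assume v: "\<forall>r<m. 0 \<le> g r v - g r (\<lambda>j. 0)"
  obtain x0 where "x0 \<in> P" using ne by blast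
  then obtain y0 where y0: "\<forall>r<m. 0 \<le> g r y0" unfolding P gsetE_def by auto
  obtain B where B: "\<forall>x\<in>P. norm x \<le> B" using bd unfolding bounded_iff by blast
  have mem: "(\<chi> k. h k (\<lambda>j. y0 j + s * v j)) \<in> P" if s: "0 \<le> s" for s
  proof -
    have "\<forall>r<m. 0 \<le> g r (\<lambda>j. y0 j + s * v j)"
    proof (intro allI impI)
      fix r assume r: "r < m"
      have "g r (\<lambda>j. y0 j + s * v j) = g r y0 + s * (g r v - g r (\<lambda>j. 0))"
        using aff_lin ag r by blast
      then show "0 \<le> g r (\<lambda>j. y0 j + s * v j)" using y0 v r s by simp
    qed
    then show ?thesis unfolding P gsetE_def by auto
  qed
  define \<delta> where "\<delta> = h k v - h k (\<lambda>j. 0)"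
  have hs: "\<bar>h k y0 + s * \<delta>\<bar> \<le> B" if s: "0 \<le> s" for s
  proof -
    have "\<bar>(\<chi> k. h k (\<lambda>j. y0 j + s * v j)) $ k\<bar> \<le> B"
      using B mem[OF s] component_le_norm_cart order_trans by blast
    moreover have "h k (\<lambda>j. y0 j + s * v j) = h k y0 + s * \<delta>"
      unfolding \<delta>_def using aff_lin ah by blast
    ultimately show ?thesis by simp
  qed
  show "h k v = h k (\<lambda>j. 0)"
  proof (rule ccontr)
    assume "h k v \<noteq> h k (\<lambda>j. 0)"
    then have d: "\<bar>\<delta>\<bar> > 0" by (simp add: \<delta>_def)
    define s where "s = (B + \<bar>h k y0\<bar> + 1) / \<bar>\<delta>\<bar>"
    have B0: "0 \<le> B" using hs[of 0] by simp
    have s0: "0 \<le> s" unfolding s_def using d B0 by simp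
    have "\<bar>s * \<delta>\<bar> = B + \<bar>h k y0\<bar> + 1" unfolding s_def using d B0 by (simp add: abs_mult)
    then have "\<bar>h k y0 + s * \<delta>\<bar> \<ge> B + 1" by linarith
    with hs[OF s0] show False by linarith
  qed
qed

lemma N1_lemma:
  fixes h :: "'n::finite \<Rightarrow> (nat \<Rightarrow> real) \<Rightarrow> real"
  assumes ag: "\<forall>r<m. aff d (g r)" and ah: "\<forall>k. aff d (h k)" and P: "P = gsetE m g [] h"
    and ne: "P \<noteq> {}" and bd: "bounded P" and ns: "\<forall>p. P \<noteq> {p}"
  shows "\<forall>y l. (\<forall>r<m. 0 \<le> (g r y - g r (\<lambda>j. 0)) + g r (\<lambda>j. 0) * l) \<longrightarrow> 0 \<le> l"
proof (intro allI impI)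
  fix y and l :: real assume yl: "\<forall>r<m. 0 \<le> (g r y - g r (\<lambda>j. 0)) + g r (\<lambda>j. 0) * l"
  have N2: "\<forall>y. (\<forall>r<m. 0 \<le> g r y - g r (\<lambda>j. 0)) \<longrightarrow> (\<forall>k. h k y = h k (\<lambda>j. 0))"
    using N2_lemma[OF ag ah P ne bd] .
  show "0 \<le> l"
  proof (rule ccontr)
    assume "\<not> 0 \<le> l"
    then have l: "l < 0" by simp
    define w where "w = (\<lambda>j. (1/l) * y j)"
    have gw: "g r w \<le> 0" if r: "r < m" for r
    proof -
      have "g r w = (1/l) * (g r y - g r (\<lambda>j. 0)) + g r (\<lambda>j. 0)"
        unfolding w_def using aff_scale ag r by blast
      moreover have "0 \<le> (g r y - g r (\<lambda>j. 0)) + g r (\<lambda>j. 0) * l" using yl r by blast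
      then have "(1/l) * ((g r y - g r (\<lambda>j. 0)) + g r (\<lambda>j. 0) * l) \<le> 0"
        using l by (simp add: divide_nonneg_neg)
      ultimately show ?thesis using l by (simp add: algebra_simps)
    qed
    have "P \<subseteq> {\<chi> k. h k w}"
    proof
      fix x assume "x \<in> P"
      then obtain y0 where y0: "\<forall>r<m. 0 \<le> g r y0" "\<forall>k. x $ k = h k y0" unfolding P gsetE_def by auto
      define v where "v = (\<lambda>j. y0 j + (-1) * w j)"
      have "\<forall>r<m. 0 \<le> g r v - g r (\<lambda>j. 0)"
      proof (intro allI impI)
        fix r assume r: "r < m"
        have "g r v = g r y0 + (-1) * (g r w - g r (\<lambda>j. 0))" unfolding v_def using aff_lin ag r by blast
        moreover have "0 \<le> g r y0" using y0 r by blast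
        ultimately show "0 \<le> g r v - g r (\<lambda>j. 0)" using gw[OF r] by simp
      qed
      then have hv: "\<forall>k. h k v = h k (\<lambda>j. 0)" using N2 by blast
      have "\<forall>k. x $ k = h k w"
      proof
        fix k
        have "h k v = h k y0 + (-1) * (h k w - h k (\<lambda>j. 0))" unfolding v_def using aff_lin ah by blast
        then show "x $ k = h k w" using hv y0 by simp
      qed
      then show "x \<in> {\<chi> k. h k w}" by (simp add: vec_eq_iff)
    qed
    then have "P = {\<chi> k. h k w}" using ne by blast
    then show False using ns by blast
  qed
qed

lemma good_exists:
  fixes P :: "(real^'n::finite) set"
  assumes "gef P m" and ne: "P \<noteq> {}" and bd: "bounded P" and alt: "m \<ge> 1 \<or> (\<forall>p. P \<noteq> {p})"
  shows "\<exists>d g h. goodf d m g h P"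
proof (cases "\<exists>p. P = {p}")
  case True
  then obtain p where p: "P = {p}" by blast
  then have m: "m \<ge> 1" using alt by blast
  define g where "g = (\<lambda>(r::nat) (y::nat\<Rightarrow>real). 1::real)"
  define h where "h = (\<lambda>k (y::nat\<Rightarrow>real). p $ k)"
  have "P = gsetE m g [] h" unfolding p gsetE_def g_def h_def by (auto simp: vec_eq_iff)
  moreover have "\<forall>y l. (\<forall>r<m. 0 \<le> (g r y - g r (\<lambda>j. 0)) + g r (\<lambda>j. 0) * l) \<longrightarrow> 0 \<le> l"
  proof (intro allI impI)
    fix y and l :: real assume "\<forall>r<m. 0 \<le> (g r y - g r (\<lambda>j. 0)) + g r (\<lambda>j. 0) * l"
    then have "0 \<le> (g 0 y - g 0 (\<lambda>j. 0)) + g 0 (\<lambda>j. 0) * l" using m by simp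
    then show "0 \<le> l" unfolding g_def by simp
  qed
  ultimately have "goodf 0 m g h P" unfolding goodf_def g_def h_def by (auto simp: aff_const)
  then show ?thesis by blast
next
  case False
  obtain d g h where ag: "\<forall>r<m. aff d (g r)" and ah: "\<forall>k. aff d (h k)" and P: "P = gsetE m g [] h"
    using assms(1) unfolding gef_def by blast
  have "goodf d m g h P" unfolding goodf_def
    using ag ah P N1_lemma[OF ag ah P ne bd] N2_lemma[OF ag ah P ne bd] False by blast
  then show ?thesis by blast
qed


lemma gsetE_memI: "(\<forall>r<m. 0 \<le> g r y) \<Longrightarrow> (\<forall>e\<in>set E. e y = 0) \<Longrightarrow> (\<forall>k. x $ k = h k y) \<Longrightarrow> x \<in> gsetE m g E h"
  unfolding gsetE_def by blast

lemma var_ef: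
  fixes P :: "(real^'n::finite) set"
  assumes "gef P m" and ne: "{x\<in>P. x $ i = 1} \<noteq> {}"
  shows "gef {x\<in>P. x $ i = 1} m"
proof -
  obtain d g h where ag: "\<forall>r<m. aff d (g r)" and ah: "\<forall>k. aff d (h k)" and P: "P = gsetE m g [] h"
    using assms(1) unfolding gef_def by blast
  have eq: "{x\<in>P. x $ i = 1} = gsetE m g [(\<lambda>y. h i y - 1)] h"
    unfolding P gsetE_def by auto
  have "\<forall>e\<in>set [(\<lambda>y. h i y - 1)]. aff d e" using ah by (simp add: aff_minus aff_const)
  moreover have "\<exists>y. \<forall>e\<in>set [(\<lambda>y. h i y - 1)]. e y = 0"
    using ne unfolding eq gsetE_def by auto
  ultimately obtain g' h' where "(\<forall>r<m. aff d (g' r)) \<and> (\<forall>k. aff d (h' k)) \<and>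
      gsetE m g [(\<lambda>y. h i y - 1)] h = gsetE m g' [] h'"
    using elim_eqs[of "[(\<lambda>y. h i y - 1)]" d m g h] ag ah by blast
  then show ?thesis unfolding gef_def eq by blast
qed

lemma and_ef:
  fixes P1 P2 :: "(real^'n::finite) set"
  assumes "gef P1 m1" "gef P2 m2" and ne: "P1 \<inter> P2 \<noteq> {}"
  shows "gef (P1 \<inter> P2) (m1 + m2)"
proof -
  obtain d1 g1 h1 where ag1: "\<forall>r<m1. aff d1 (g1 r)" and ah1: "\<forall>k. aff d1 (h1 k)" and P1: "P1 = gsetE m1 g1 [] h1"
    using assms(1) unfolding gef_def by blast
  obtain d2 g2 h2 where ag2: "\<forall>r<m2. aff d2 (g2 r)" and ah2: "\<forall>k. aff d2 (h2 k)" and P2: "P2 = gsetE m2 g2 [] h2"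
    using assms(2) unfolding gef_def by blast
  obtain xs :: "'n list" where xs: "set xs = UNIV" using finite_list[of "UNIV :: 'n set"] by auto
  define D where "D = d1 + d2"
  define G where "G r y = (if r < m1 then g1 r y else g2 (r - m1) (\<lambda>j. y (d1 + j)))" for r y
  define E where "E = map (\<lambda>k y. h1 k y - h2 k (\<lambda>j. y (d1 + j))) xs"
  have aG: "\<forall>r<m1+m2. aff D (G r)"
  proof (intro allI impI)
    fix r assume r: "r < m1 + m2"
    show "aff D (G r)"
    proof (cases "r < m1")
      case True
      then have "G r = g1 r" by (auto simp: G_def)
      then show ?thesis using ag1 True aff_mono[of d1 _ D] by (simp add: D_def)
    next
      case False
      then have "G r = (\<lambda>y. g2 (r - m1) (\<lambda>j. y (d1 + j)))" by (auto simp: G_def)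
      moreover have "r - m1 < m2" using r False by simp
      ultimately show ?thesis using ag2 aff_shift[of d2 _ d1] by (simp add: D_def)
    qed
  qed
  have aH: "\<forall>k. aff D (h1 k)" using ah1 aff_mono[of d1 _ D] by (simp add: D_def)
  have aE: "\<forall>e\<in>set E. aff D e"
  proof
    fix e assume "e \<in> set E"
    then obtain k where e: "e = (\<lambda>y. h1 k y - h2 k (\<lambda>j. y (d1 + j)))" unfolding E_def by auto
    have "aff D (\<lambda>y. h2 k (\<lambda>j. y (d1 + j)))" using ah2 aff_shift[of d2 _ d1] by (simp add: D_def)
    then show "aff D e" unfolding e using aH by (simp add: aff_minus)
  qed
  have eq: "P1 \<inter> P2 = gsetE (m1+m2) G E h1"
  proof
    show "P1 \<inter> P2 \<subseteq> gsetE (m1+m2) G E h1"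
    proof
      fix x assume "x \<in> P1 \<inter> P2"
      then obtain y1 y2 where y1: "\<forall>r<m1. 0 \<le> g1 r y1" "\<forall>k. x $ k = h1 k y1"
        and y2: "\<forall>r<m2. 0 \<le> g2 r y2" "\<forall>k. x $ k = h2 k y2"
        unfolding P1 P2 gsetE_def by auto
      define y where "y j = (if j < d1 then y1 j else y2 (j - d1))" for j
      have Y2: "(\<lambda>j. y (d1 + j)) = y2" by (auto simp: y_def)
      have g1y: "g1 r y = g1 r y1" if "r < m1" for r
        using aff_dep[of d1 "g1 r" y y1] ag1 that by (simp add: y_def)
      have h1y: "h1 k y = h1 k y1" for k
        using aff_dep[of d1 "h1 k" y y1] ah1 by (simp add: y_def)
      have "\<forall>r<m1+m2. 0 \<le> G r y"
        unfolding G_def Y2 using y1 y2 g1y by auto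
      moreover have "\<forall>e\<in>set E. e y = 0" unfolding E_def using y1 y2 h1y by (auto simp: Y2)
      moreover have "\<forall>k. x $ k = h1 k y" using y1 h1y by simp
      ultimately show "x \<in> gsetE (m1+m2) G E h1" by (rule gsetE_memI)
    qed
  next
    show "gsetE (m1+m2) G E h1 \<subseteq> P1 \<inter> P2"
    proof
      fix x assume "x \<in> gsetE (m1+m2) G E h1"
      then obtain y where y: "\<forall>r<m1+m2. 0 \<le> G r y" "\<forall>e\<in>set E. e y = 0" "\<forall>k. x $ k = h1 k y"
        unfolding gsetE_def by blast
      have "\<forall>r<m1. 0 \<le> g1 r y"
      proof (intro allI impI)
        fix r assume r: "r < m1"
        then have "0 \<le> G r y" using y(1) by simp
        then show "0 \<le> g1 r y" using r by (simp add: G_def)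
      qed
      then have "x \<in> P1" unfolding P1 using y(3) by (intro gsetE_memI) auto
      moreover have "\<forall>r<m2. 0 \<le> g2 r (\<lambda>j. y (d1 + j))"
      proof (intro allI impI)
        fix r assume "r < m2"
        then have "0 \<le> G (m1 + r) y" using y(1) by simp
        then show "0 \<le> g2 r (\<lambda>j. y (d1 + j))" by (simp add: G_def)
      qed
      moreover have "\<forall>k. x $ k = h2 k (\<lambda>j. y (d1 + j))"
        using y(2,3) xs unfolding E_def by auto
      ultimately show "x \<in> P1 \<inter> P2" unfolding P2 by (auto intro!: gsetE_memI)
    qed
  qed
  have "\<exists>y. \<forall>e\<in>set E. e y = 0" using ne unfolding eq gsetE_def by blast
  then obtain g' h' where "(\<forall>r<m1+m2. aff D (g' r)) \<and> (\<forall>k. aff D (h' k)) \<and>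
      gsetE (m1+m2) G E h1 = gsetE (m1+m2) g' [] h'"
    using elim_eqs[OF aE aG aH] by blast
  then show ?thesis unfolding gef_def eq by blast
qed


lemma aff_if: "aff d f \<Longrightarrow> aff d g \<Longrightarrow> aff d (\<lambda>y. if c then f y else g y)"
  by (cases c) auto

lemma or_ef:
  fixes P1 P2 :: "(real^'n::finite) set"
  assumes G1: "goodf d1 m1 g1 h1 P1" and G2: "goodf d2 m2 g2 h2 P2"
    and ne1: "P1 \<noteq> {}" and ne2: "P2 \<noteq> {}"
  shows "gef (convex hull (P1 \<union> P2)) (m1 + m2)"
proof -
  have ag1: "\<forall>r<m1. aff d1 (g1 r)" and ah1: "\<forall>k. aff d1 (h1 k)" and P1: "P1 = gsetE m1 g1 [] h1"
    and N11: "\<forall>y l. (\<forall>r<m1. 0 \<le> (g1 r y - g1 r (\<lambda>j. 0)) + g1 r (\<lambda>j. 0) * l) \<longrightarrow> 0 \<le> l"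
    and N21: "\<forall>y. (\<forall>r<m1. 0 \<le> g1 r y - g1 r (\<lambda>j. 0)) \<longrightarrow> (\<forall>k. h1 k y = h1 k (\<lambda>j. 0))"
    using G1 unfolding goodf_def by blast+
  have ag2: "\<forall>r<m2. aff d2 (g2 r)" and ah2: "\<forall>k. aff d2 (h2 k)" and P2: "P2 = gsetE m2 g2 [] h2"
    and N12: "\<forall>y l. (\<forall>r<m2. 0 \<le> (g2 r y - g2 r (\<lambda>j. 0)) + g2 r (\<lambda>j. 0) * l) \<longrightarrow> 0 \<le> l"
    and N22: "\<forall>y. (\<forall>r<m2. 0 \<le> g2 r y - g2 r (\<lambda>j. 0)) \<longrightarrow> (\<forall>k. h2 k y = h2 k (\<lambda>j. 0))"
    using G2 unfolding goodf_def by blast+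
  define D where "D = d1 + d2 + 1"
  define L where "L = d1 + d2"
  define Z where "Z = (\<lambda>j::nat. 0::real)"
  define G where "G r y = (if r < m1 then (g1 r y - g1 r Z) + g1 r Z * y L
      else (g2 (r - m1) (\<lambda>j. y (d1 + j)) - g2 (r - m1) Z) + g2 (r - m1) Z * (1 - y L))" for r y
  define H where "H k y = (h1 k y - h1 k Z) + h1 k Z * y L
      + ((h2 k (\<lambda>j. y (d1 + j)) - h2 k Z) + h2 k Z * (1 - y L))" for k y
  have aL: "aff D (\<lambda>y. y L)" unfolding D_def L_def by (rule aff_coord) simp
  have aL1: "aff D (\<lambda>y. 1 - y L)" using aL by (intro aff_minus aff_const)
  have a1: "aff D f" if "aff d1 f" for f using that aff_mono[of d1 f D] by (simp add: D_def)
  have a2: "aff D (\<lambda>y. f (\<lambda>j. y (d1 + j)))" if "aff d2 f" for f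
    using that aff_shift[of d2 f d1] aff_mono[of "d1 + d2" _ D] by (simp add: D_def)
  have aG: "\<forall>r<m1+m2. aff D (G r)"
  proof (intro allI impI)
    fix r assume r: "r < m1 + m2"
    have "G r = (\<lambda>y. if r < m1 then (g1 r y - g1 r Z) + g1 r Z * y L
      else (g2 (r - m1) (\<lambda>j. y (d1 + j)) - g2 (r - m1) Z) + g2 (r - m1) Z * (1 - y L))"
      by (simp add: G_def fun_eq_iff)
    moreover have "aff D (\<lambda>y. (g1 r y - g1 r Z) + g1 r Z * y L)" if "r < m1"
      using ag1 that by (intro aff_add aff_minus aff_const aff_smult aL a1) auto
    moreover have "aff D (\<lambda>y. (g2 (r - m1) (\<lambda>j. y (d1 + j)) - g2 (r - m1) Z) + g2 (r - m1) Z * (1 - y L))"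
      if "\<not> r < m1"
      using ag2 that r by (intro aff_add aff_minus aff_const aff_smult aL1 a2) auto
    ultimately show "aff D (G r)" by (cases "r < m1") auto
  qed
  have aH: "\<forall>k. aff D (H k)"
  proof
    fix k
    have "H k = (\<lambda>y. (h1 k y - h1 k Z) + h1 k Z * y L
      + ((h2 k (\<lambda>j. y (d1 + j)) - h2 k Z) + h2 k Z * (1 - y L)))" by (simp add: H_def fun_eq_iff)
    moreover have "aff D (\<lambda>y. (h1 k y - h1 k Z) + h1 k Z * y L
      + ((h2 k (\<lambda>j. y (d1 + j)) - h2 k Z) + h2 k Z * (1 - y L)))"
      using ah1 ah2 by (intro aff_add aff_minus aff_const aff_smult aL aL1 a1 a2) auto
    ultimately show "aff D (H k)" by simp
  qed
  define S where "S = gsetE (m1+m2) G [] H"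
  have convS: "convex S"
  proof (rule convexI)
    fix x x' :: "real^'n" and u v :: real
    assume x: "x \<in> S" and x': "x' \<in> S" and u: "0 \<le> u" and v: "0 \<le> v" and uv: "u + v = 1"
    obtain y where y: "\<forall>r<m1+m2. 0 \<le> G r y" "\<forall>k. x $ k = H k y" using x unfolding S_def gsetE_def by auto
    obtain y' where y': "\<forall>r<m1+m2. 0 \<le> G r y'" "\<forall>k. x' $ k = H k y'" using x' unfolding S_def gsetE_def by auto
    have v1: "v = 1 - u" using uv by simp
    define z where "z = (\<lambda>j. u * y j + (1 - u) * y' j)"
    show "u *\<^sub>R x + v *\<^sub>R x' \<in> S" unfolding S_def
    proof (rule gsetE_memI[where y = z])
      show "\<forall>r<m1+m2. 0 \<le> G r z"
      proof (intro allI impI)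
        fix r assume r: "r < m1 + m2"
        have "G r z = u * G r y + (1 - u) * G r y'" unfolding z_def using aff_comb aG r by blast
        then show "0 \<le> G r z" using y(1) y'(1) r u v v1 by simp
      qed
      show "\<forall>e\<in>set []. e z = 0" by simp
      show "\<forall>k. (u *\<^sub>R x + v *\<^sub>R x') $ k = H k z"
      proof
        fix k
        have "H k z = u * H k y + (1 - u) * H k y'" unfolding z_def using aff_comb aH by blast
        then show "(u *\<^sub>R x + v *\<^sub>R x') $ k = H k z" using y(2) y'(2) v1 by simp
      qed
    qed
  qed
  have sub1: "P1 \<subseteq> S"
  proof
    fix x assume "x \<in> P1"
    then obtain y1 where y1: "\<forall>r<m1. 0 \<le> g1 r y1" "\<forall>k. x $ k = h1 k y1" unfolding P1 gsetE_def by auto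
    define y where "y j = (if j < d1 then y1 j else if j = L then 1 else 0)" for j
    have yL: "y L = 1" by (simp add: y_def L_def)
    have g1y: "g1 r y = g1 r y1" if "r < m1" for r
      using aff_dep[of d1 "g1 r" y y1] ag1 that by (simp add: y_def)
    have h1y: "h1 k y = h1 k y1" for k
      using aff_dep[of d1 "h1 k" y y1] ah1 by (simp add: y_def)
    have Y2: "\<forall>j<d2. (\<lambda>j. y (d1 + j)) j = Z j" by (simp add: y_def L_def Z_def)
    have g2y: "g2 r (\<lambda>j. y (d1 + j)) = g2 r Z" if "r < m2" for r
      using aff_dep[OF _ Y2] ag2 that by blast
    have h2y: "h2 k (\<lambda>j. y (d1 + j)) = h2 k Z" for k
      using aff_dep[OF _ Y2] ah2 by blast
    show "x \<in> S" unfolding S_def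
    proof (rule gsetE_memI[where y = y])
      show "\<forall>r<m1+m2. 0 \<le> G r y"
        using y1(1) g1y g2y yL by (auto simp: G_def)
      show "\<forall>e\<in>set []. e y = 0" by simp
      show "\<forall>k. x $ k = H k y" using y1(2) h1y h2y yL by (simp add: H_def)
    qed
  qed
  have sub2: "P2 \<subseteq> S"
  proof
    fix x assume "x \<in> P2"
    then obtain y2 where y2: "\<forall>r<m2. 0 \<le> g2 r y2" "\<forall>k. x $ k = h2 k y2" unfolding P2 gsetE_def by auto
    define y where "y j = (if j < d1 then 0 else if j < L then y2 (j - d1) else 0)" for j
    have yL: "y L = 0" by (simp add: y_def L_def)
    have Y1: "\<forall>j<d1. y j = Z j" by (simp add: y_def Z_def)
    have g1y: "g1 r y = g1 r Z" if "r < m1" for r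
      using aff_dep[OF _ Y1] ag1 that by blast
    have h1y: "h1 k y = h1 k Z" for k
      using aff_dep[OF _ Y1] ah1 by blast
    have Y2: "\<forall>j<d2. (\<lambda>j. y (d1 + j)) j = y2 j" by (simp add: y_def L_def)
    have g2y: "g2 r (\<lambda>j. y (d1 + j)) = g2 r y2" if "r < m2" for r
      using aff_dep[OF _ Y2] ag2 that by blast
    have h2y: "h2 k (\<lambda>j. y (d1 + j)) = h2 k y2" for k
      using aff_dep[OF _ Y2] ah2 by blast
    show "x \<in> S" unfolding S_def
    proof (rule gsetE_memI[where y = y])
      show "\<forall>r<m1+m2. 0 \<le> G r y"
      proof (intro allI impI)
        fix r assume r: "r < m1 + m2"
        show "0 \<le> G r y"
        proof (cases "r < m1")
          case True then show ?thesis using g1y yL by (simp add: G_def)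
        next
          case False then show ?thesis using g2y[of "r - m1"] y2(1) yL r by (simp add: G_def)
        qed
      qed
      show "\<forall>e\<in>set []. e y = 0" by simp
      show "\<forall>k. x $ k = H k y" using y2(2) h1y h2y yL by (simp add: H_def)
    qed
  qed
  have "S \<subseteq> convex hull (P1 \<union> P2)"
  proof
    fix x assume "x \<in> S"
    then obtain y where y: "\<forall>r<m1+m2. 0 \<le> G r y" "\<forall>k. x $ k = H k y" unfolding S_def gsetE_def by auto
    define l where "l = y L"
    define y2 where "y2 = (\<lambda>j. y (d1 + j))"
    have r1: "\<forall>r<m1. 0 \<le> (g1 r y - g1 r Z) + g1 r Z * l"
    proof (intro allI impI)
      fix r assume r: "r < m1"
      then have "0 \<le> G r y" using y(1) by simp
      then show "0 \<le> (g1 r y - g1 r Z) + g1 r Z * l" using r by (simp add: G_def l_def)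
    qed
    have r2: "\<forall>r<m2. 0 \<le> (g2 r y2 - g2 r Z) + g2 r Z * (1 - l)"
    proof (intro allI impI)
      fix r assume "r < m2"
      then have "0 \<le> G (m1 + r) y" using y(1) by simp
      then show "0 \<le> (g2 r y2 - g2 r Z) + g2 r Z * (1 - l)" by (simp add: G_def l_def y2_def)
    qed
    have l0: "0 \<le> l" using N11 r1 unfolding Z_def by blast
    have l1: "0 \<le> 1 - l" using N12 r2 unfolding Z_def by blast
    have Hx: "\<forall>k. x $ k = (h1 k y - h1 k Z) + h1 k Z * l + ((h2 k y2 - h2 k Z) + h2 k Z * (1 - l))"
      using y(2) by (simp add: H_def l_def y2_def)
    have inP1: "(\<chi> k. h1 k w) \<in> P1" if "\<forall>r<m1. 0 \<le> g1 r w" for w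
      unfolding P1 using that by (intro gsetE_memI[where y = w]) auto
    have inP2: "(\<chi> k. h2 k w) \<in> P2" if "\<forall>r<m2. 0 \<le> g2 r w" for w
      unfolding P2 using that by (intro gsetE_memI[where y = w]) auto
    consider "l = 0" | "l = 1" | "0 < l \<and> l < 1" using l0 l1 by linarith
    then show "x \<in> convex hull (P1 \<union> P2)"
    proof cases
      case 1
      have "\<forall>r<m1. 0 \<le> g1 r y - g1 r Z" using r1 1 by simp
      then have hz: "\<forall>k. h1 k y = h1 k Z" using N21 unfolding Z_def by blast
      have "\<forall>r<m2. 0 \<le> g2 r y2" using r2 1 by simp
      then have "(\<chi> k. h2 k y2) \<in> P2" by (rule inP2)
      moreover have "x = (\<chi> k. h2 k y2)" using Hx hz 1 by (simp add: vec_eq_iff)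
      ultimately show ?thesis by (simp add: hull_inc)
    next
      case 2
      have "\<forall>r<m2. 0 \<le> g2 r y2 - g2 r Z" using r2 2 by simp
      then have hz: "\<forall>k. h2 k y2 = h2 k Z" using N22 unfolding Z_def by blast
      have "\<forall>r<m1. 0 \<le> g1 r y" using r1 2 by simp
      then have "(\<chi> k. h1 k y) \<in> P1" by (rule inP1)
      moreover have "x = (\<chi> k. h1 k y)" using Hx hz 2 by (simp add: vec_eq_iff)
      ultimately show ?thesis by (simp add: hull_inc)
    next
      case 3
      define w1 where "w1 = (\<lambda>j. (1 / l) * y j)"
      define w2 where "w2 = (\<lambda>j. (1 / (1 - l)) * y2 j)"
      have sc1: "f w1 = (1/l) * (f y - f Z) + f Z" if "aff d1 f" for f
        unfolding w1_def Z_def using aff_scale[OF that] by blast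
      have sc2: "f w2 = (1/(1-l)) * (f y2 - f Z) + f Z" if "aff d2 f" for f
        unfolding w2_def Z_def using aff_scale[OF that] by blast
      have "\<forall>r<m1. 0 \<le> g1 r w1"
      proof (intro allI impI)
        fix r assume r: "r < m1"
        have "0 \<le> (1/l) * ((g1 r y - g1 r Z) + g1 r Z * l)" using r1 r 3 by simp
        also have "\<dots> = g1 r w1"
        proof -
          have "g1 r w1 = (1/l) * (g1 r y - g1 r Z) + g1 r Z" using sc1 ag1 r by blast
          moreover have "l \<noteq> 0" using 3 by simp
          ultimately show ?thesis by (simp add: field_simps)
        qed
        finally show "0 \<le> g1 r w1" .
      qed
      then have p1: "(\<chi> k. h1 k w1) \<in> P1" by (rule inP1)
      have "\<forall>r<m2. 0 \<le> g2 r w2"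
      proof (intro allI impI)
        fix r assume r: "r < m2"
        have "0 \<le> (1/(1-l)) * ((g2 r y2 - g2 r Z) + g2 r Z * (1 - l))" using r2 r 3 by simp
        also have "\<dots> = g2 r w2"
        proof -
          have "g2 r w2 = (1/(1-l)) * (g2 r y2 - g2 r Z) + g2 r Z" using sc2 ag2 r by blast
          moreover have "1 - l \<noteq> 0" using 3 by simp
          ultimately show ?thesis by (simp add: field_simps)
        qed
        finally show "0 \<le> g2 r w2" .
      qed
      then have p2: "(\<chi> k. h2 k w2) \<in> P2" by (rule inP2)
      have "x = l *\<^sub>R (\<chi> k. h1 k w1) + (1 - l) *\<^sub>R (\<chi> k. h2 k w2)"
      proof (subst vec_eq_iff, rule allI)
        fix k
        have l0: "l \<noteq> 0" "1 - l \<noteq> 0" using 3 by auto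
        have "h1 k w1 = (1/l) * (h1 k y - h1 k Z) + h1 k Z" using sc1 ah1 by blast
        then have e1: "l * h1 k w1 = (h1 k y - h1 k Z) + h1 k Z * l" using l0 by (simp add: field_simps)
        have "h2 k w2 = (1/(1-l)) * (h2 k y2 - h2 k Z) + h2 k Z" using sc2 ah2 by blast
        then have e2: "(1 - l) * h2 k w2 = (h2 k y2 - h2 k Z) + h2 k Z * (1 - l)"
          using l0 by (simp add: field_simps)
        show "x $ k = (l *\<^sub>R (\<chi> k. h1 k w1) + (1 - l) *\<^sub>R (\<chi> k. h2 k w2)) $ k"
          using Hx e1 e2 by simp
      qed
      moreover have "convex (convex hull (P1 \<union> P2))" by simp
      ultimately show ?thesis using p1 p2 3 convexD[of "convex hull (P1 \<union> P2)" "(\<chi> k. h1 k w1)" "(\<chi> k. h2 k w2)" l "1 - l"]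
        by (simp add: hull_inc)
    qed
  qed
  moreover have "convex hull (P1 \<union> P2) \<subseteq> S" using sub1 sub2 convS by (simp add: hull_minimal)
  ultimately have "convex hull (P1 \<union> P2) = S" by blast
  then show ?thesis unfolding gef_def S_def using aG aH by blast
qed


lemma polytope_mapply:
  fixes Q :: "(real^'n::finite) set"
  assumes "polytope Q"
  shows "polytope (mapply f Q)"
proof (induction f)
  case (MVar i)
  have "{x\<in>Q. x $ i = 1} = Q \<inter> {x. axis i 1 \<bullet> x = 1}" by (auto simp: inner_axis')
  moreover have "polyhedron {x::real^'n. axis i 1 \<bullet> x = 1}" by (rule polyhedron_hyperplane)
  ultimately show ?case using assms by (simp add: polytope_Int_polyhedron)
next
  case (MAnd f1 f2)
  then show ?case by (simp add: polytope_Int)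
next
  case (MOr f1 f2)
  then obtain v1 v2 where v: "finite v1" "mapply f1 Q = convex hull v1" "finite v2" "mapply f2 Q = convex hull v2"
    unfolding polytope_def by blast
  have "convex hull (convex hull v1 \<union> convex hull v2) = convex hull (v1 \<union> v2)"
    by (rule hull_Un[symmetric]) (simp add: convex_Inter)
  moreover have "finite (v1 \<union> v2)" using v by simp
  ultimately show ?case using v polytope_convex_hull by (metis mapply.simps(3))
qed

lemma ext_mapply:
  fixes Q :: "(real^'n::finite) set"
  assumes cQ: "convex Q" and bQ: "bounded Q" and oQ: "ones \<in> Q" and gQ: "gef Q \<sigma>" and s1: "\<sigma> \<ge> 1"
  shows "gef (mapply f Q) (msize f * \<sigma>)"
proof (induction f)
  case (MVar i)
  have "ones \<in> {x\<in>Q. x $ i = 1}" using oQ by (simp add: ones_def)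
  then show ?case using var_ef[OF gQ] by fastforce
next
  case (MAnd f1 f2)
  have "ones \<in> mapply f1 Q \<inter> mapply f2 Q" using ones_mapply[OF oQ] by blast
  then have ne: "mapply f1 Q \<inter> mapply f2 Q \<noteq> {}" by blast
  have "gef (mapply f1 Q \<inter> mapply f2 Q) (msize f1 * \<sigma> + msize f2 * \<sigma>)"
    by (rule and_ef[OF MAnd.IH ne])
  then show ?case by (simp add: distrib_right)
next
  case (MOr f1 f2)
  have ne: "mapply f Q \<noteq> {}" for f using ones_mapply[OF oQ, of f] by blast
  have bd: "bounded (mapply f Q)" for f using bQ mapply_sub[OF cQ] bounded_subset by blast
  have m: "msize f * \<sigma> \<ge> 1" for f using msize_pos[of f] s1 by (simp add: one_le_mult_iff)
  obtain d1 g1 h1 where 1: "goodf d1 (msize f1 * \<sigma>) g1 h1 (mapply f1 Q)"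
    using good_exists[OF MOr.IH(1) ne bd] m by blast
  obtain d2 g2 h2 where 2: "goodf d2 (msize f2 * \<sigma>) g2 h2 (mapply f2 Q)"
    using good_exists[OF MOr.IH(2) ne bd] m by blast
  have "gef (convex hull (mapply f1 Q \<union> mapply f2 Q)) (msize f1 * \<sigma> + msize f2 * \<sigma>)"
    using or_ef[OF 1 2 ne ne] .
  then show ?case by (simp add: distrib_right)
qed

lemma part2:
  fixes \<phi> :: "'n::finite mformula" and Q :: "(real ^ 'n) set"
  assumes cQ: "convex Q" and sub: "defined_set \<phi> \<subseteq> Q" and pQ: "polytope Q" and hQ: "has_ext_form Q \<sigma>"
  shows "polytope (mapply \<phi> Q) \<and> has_ext_form (mapply \<phi> Q) (msize \<phi> * \<sigma>)"
proof -
  have oQ: "ones \<in> Q" using sub ones_defined by blast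
  have bQ: "bounded Q" using pQ by (rule polytope_imp_bounded)
  have gQ: "gef Q \<sigma>" using hQ has_ext_form_gef by blast
  have "has_ext_form (mapply \<phi> Q) (msize \<phi> * \<sigma>)"
  proof (cases "\<sigma> = 0")
    case True
    obtain d g h where ag: "\<forall>r<\<sigma>. aff d (g r)" and ah: "\<forall>k. aff d (h k)" and P: "Q = gsetE \<sigma> g [] h"
      using gQ unfolding gef_def by blast
    have N2: "\<forall>y. (\<forall>r<\<sigma>. 0 \<le> g r y - g r (\<lambda>j. 0)) \<longrightarrow> (\<forall>k. h k y = h k (\<lambda>j. 0))"
      using N2_lemma[OF ag ah P _ bQ] oQ by blast
    have "Q \<subseteq> {\<chi> k. h k (\<lambda>j. 0)}"
    proof
      fix x assume "x \<in> Q"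
      then obtain y where y: "\<forall>k. x $ k = h k y" unfolding P gsetE_def by auto
      have "\<forall>k. h k y = h k (\<lambda>j. 0)" using N2 True by blast
      then have "x = (\<chi> k. h k (\<lambda>j. 0))" using y by (simp add: vec_eq_iff)
      then show "x \<in> {\<chi> k. h k (\<lambda>j. 0)}" by blast
    qed
    then have Qs: "Q = {ones}" using oQ subset_singletonD by fastforce
    have "mapply \<phi> Q \<subseteq> {ones}" using mapply_sub[OF cQ, of \<phi>] Qs by simp
    then have "mapply \<phi> Q = Q" using ones_mapply[OF oQ, of \<phi>] Qs subset_singletonD by fastforce
    then show ?thesis using hQ True by simp
  next
    case False
    then have "\<sigma> \<ge> 1" by simp
    then have "gef (mapply \<phi> Q) (msize \<phi> * \<sigma>)" using ext_mapply[OF cQ bQ oQ gQ] by blast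
    then show ?thesis using has_ext_form_gef by blast
  qed
  then show ?thesis using polytope_mapply[OF pQ] by blast
qed

theorem theorem4p3:
  fixes \<phi> :: "'n::finite mformula" and Q :: "(real ^ 'n) set" and p :: nat
  assumes "convex Q"
    and "\<forall>x\<in>Q. \<forall>i. 0 \<le> x $ i \<and> x $ i \<le> 1"
    and "defined_set \<phi> \<subseteq> Q"
  shows "((\<forall>c \<delta>. (\<forall>i. c i \<ge> 0) \<longrightarrow> \<delta> \<ge> 0 \<longrightarrow> satisfies_ineq (defined_set \<phi>) c \<delta>
              \<longrightarrow> pitch c \<delta> \<le> p \<longrightarrow> satisfies_ineq Q c \<delta>)
          \<longrightarrow> (\<forall>c \<delta>. (\<forall>i. c i \<ge> 0) \<longrightarrow> \<delta> \<ge> 0 \<longrightarrow> satisfies_ineq (defined_set \<phi>) c \<delta>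
              \<longrightarrow> pitch c \<delta> \<le> p + 1 \<longrightarrow> satisfies_ineq (mapply \<phi> Q) c \<delta>))
       \<and> (\<forall>\<sigma>. polytope Q \<and> has_ext_form Q \<sigma>
              \<longrightarrow> polytope (mapply \<phi> Q) \<and> has_ext_form (mapply \<phi> Q) (msize \<phi> * \<sigma>))"
  using part1[OF assms(1,2)] part2[OF assms(1,3)] by blast


end
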